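(* Let $T=(V,E)$ be a tree with $\mathrm{pthin}(T)=2$, and let $\sigma$ be an ordering of $V$ and $S=\{V^0,V^1\}$ a partition of $V$ that are strongly consistent. Let $v_1,v_2,v_3$ be vertices with $v_1<v_2<v_3$ and $\deg(v_2)\ge 4$. Then there is no vertex $v_0$ that is the nexus between $v_1,v_2,v_3$.
   Context: For a graph $G=(V,E)$, a linear ordering $<$ of $V$ and a partition of $V$ into classes are called strongly consistent if for every triple $r<s<t$ of vertices with $rt\in E$: if $r$ and $s$ belong to the same class then $st\in E$, and if $s$ and $t$ belong to the same class then $rs\in E$. The proper thinness $\mathrm{pthin}(G)$ is the minimum $k$ such that some ordering and some partition into $k$ classes are strongly consistent. For distinct vertices $v_0,v_1,v_2,v_3$ of a tree $T$, let $C_i$ be the unique simple path from $v_0$ to $v_i$ ($i=1,2,3$) and $C_i'$ its vertex set minus $v_0$; $v_0$ is the nexus between $v_1,v_2,v_3$ if $C_1',C_2',C_3'$ are pairwise disjoint. *)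

theory Defs
  imports Main "HOL-Library.Disjoint_Sets"
begin

definition simple_graph :: "'a set \<Rightarrow> 'a set set \<Rightarrow> bool" where
  "simple_graph V E \<longleftrightarrow> finite V \<and> (\<forall>e\<in>E. \<exists>u v. e = {u, v} \<and> u \<noteq> v \<and> u \<in> V \<and> v \<in> V)"

definition simple_path :: "'a set \<Rightarrow> 'a set set \<Rightarrow> 'a \<Rightarrow> 'a \<Rightarrow> 'a list \<Rightarrow> bool" where
  "simple_path V E x y p \<longleftrightarrow> p \<noteq> [] \<and> hd p = x \<and> last p = y \<and> distinct p \<and> set p \<subseteq> V
     \<and> (\<forall>i. Suc i < length p \<longrightarrow> {p ! i, p ! Suc i} \<in> E)"

definition connected_graph :: "'a set \<Rightarrow> 'a set set \<Rightarrow> bool" where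
  "connected_graph V E \<longleftrightarrow> (\<forall>x\<in>V. \<forall>y\<in>V. \<exists>p. simple_path V E x y p)"

definition is_cycle :: "'a set \<Rightarrow> 'a set set \<Rightarrow> 'a list \<Rightarrow> bool" where
  "is_cycle V E c \<longleftrightarrow> length c \<ge> 3 \<and> distinct c \<and> set c \<subseteq> V
     \<and> (\<forall>i. Suc i < length c \<longrightarrow> {c ! i, c ! Suc i} \<in> E) \<and> {last c, hd c} \<in> E"

definition is_tree :: "'a set \<Rightarrow> 'a set set \<Rightarrow> bool" where
  "is_tree V E \<longleftrightarrow> simple_graph V E \<and> V \<noteq> {} \<and> connected_graph V E \<and> (\<nexists>c. is_cycle V E c)"

definition degree :: "'a set \<Rightarrow> 'a set set \<Rightarrow> 'a \<Rightarrow> nat" where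
  "degree V E v = card {u \<in> V. {v, u} \<in> E}"

definition same_class :: "'a set set \<Rightarrow> 'a \<Rightarrow> 'a \<Rightarrow> bool" where
  "same_class P x y \<longleftrightarrow> (\<exists>X\<in>P. x \<in> X \<and> y \<in> X)"

definition vertex_ordering :: "'a set \<Rightarrow> ('a \<times> 'a) set \<Rightarrow> bool" where
  "vertex_ordering V lt \<longleftrightarrow> lt \<subseteq> V \<times> V \<and> strict_linear_order_on V lt"

definition strongly_consistent :: "'a set \<Rightarrow> 'a set set \<Rightarrow> ('a \<times> 'a) set \<Rightarrow> 'a set set \<Rightarrow> bool" where
  "strongly_consistent V E lt P \<longleftrightarrow>
     (\<forall>r s t. (r, s) \<in> lt \<and> (s, t) \<in> lt \<and> {r, t} \<in> E \<longrightarrow>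
        (same_class P r s \<longrightarrow> {s, t} \<in> E) \<and> (same_class P s t \<longrightarrow> {r, s} \<in> E))"

definition pthin :: "'a set \<Rightarrow> 'a set set \<Rightarrow> nat" where
  "pthin V E = (LEAST k. \<exists>lt P. vertex_ordering V lt \<and> partition_on V P \<and> card P = k
                               \<and> strongly_consistent V E lt P)"

definition nexus :: "'a set \<Rightarrow> 'a set set \<Rightarrow> 'a \<Rightarrow> 'a \<Rightarrow> 'a \<Rightarrow> 'a \<Rightarrow> bool" where
  "nexus V E v0 v1 v2 v3 \<longleftrightarrow> distinct [v0, v1, v2, v3] \<and> {v0, v1, v2, v3} \<subseteq> V \<and>
     (\<exists>p1 p2 p3. simple_path V E v0 v1 p1 \<and> simple_path V E v0 v2 p2 \<and> simple_path V E v0 v3 p3 \<and>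
        (set p1 - {v0}) \<inter> (set p2 - {v0}) = {} \<and>
        (set p1 - {v0}) \<inter> (set p3 - {v0}) = {} \<and>
        (set p2 - {v0}) \<inter> (set p3 - {v0}) = {})"

end

theory Submission
  imports Defs
begin


definition walk :: "'a set set \<Rightarrow> 'a list \<Rightarrow> bool" where
  "walk E p \<longleftrightarrow> (\<forall>i. Suc i < length p \<longrightarrow> {p ! i, p ! Suc i} \<in> E)"

lemma walk_Nil[simp]: "walk E []" and walk_single[simp]: "walk E [x]"
  by (auto simp: walk_def)

lemma walk_Cons2[simp]: "walk E (x # y # xs) \<longleftrightarrow> {x, y} \<in> E \<and> walk E (y # xs)"
proof
  assume "walk E (x # y # xs)"
  then show "{x, y} \<in> E \<and> walk E (y # xs)"
    unfolding walk_def by (metis Suc_less_eq length_Cons nth_Cons_0 nth_Cons_Suc zero_less_Suc)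
next
  assume h: "{x, y} \<in> E \<and> walk E (y # xs)"
  show "walk E (x # y # xs)" unfolding walk_def
  proof (intro allI impI)
    fix i assume "Suc i < length (x # y # xs)"
    then show "{(x # y # xs) ! i, (x # y # xs) ! Suc i} \<in> E"
      using h unfolding walk_def by (cases i) auto
  qed
qed

lemma walk_append:
  "walk E (xs @ ys) \<longleftrightarrow> walk E xs \<and> walk E ys \<and> (xs \<noteq> [] \<and> ys \<noteq> [] \<longrightarrow> {last xs, hd ys} \<in> E)"
proof (induction xs)
  case Nil then show ?case by simp
next
  case (Cons x xs)
  show ?case
  proof (cases xs)
    case Nil
    then show ?thesis by (cases ys) auto
  next
    case (Cons y zs)
    then show ?thesis using Cons.IH[unfolded Cons] by (auto simp: Cons)
  qed
qed

lemma walk_rev[simp]: "walk E (rev xs) \<longleftrightarrow> walk E xs"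
proof (induction xs)
  case Nil then show ?case by simp
next
  case (Cons x xs)
  then show ?case by (cases xs) (auto simp: walk_append insert_commute)
qed

lemma walk_take: "walk E xs \<Longrightarrow> walk E (take n xs)"
  unfolding walk_def by auto

lemma walk_drop: "walk E xs \<Longrightarrow> walk E (drop n xs)"
  unfolding walk_def by auto

lemma walk_tl: "walk E xs \<Longrightarrow> walk E (tl xs)"
  by (metis drop_0 drop_Suc walk_drop)

lemma walk_butlast: "walk E xs \<Longrightarrow> walk E (butlast xs)"
  by (metis butlast_conv_take walk_take)

lemma walk_reduce:
  "walk E xs \<Longrightarrow> xs \<noteq> [] \<Longrightarrow> \<exists>ys. walk E ys \<and> distinct ys \<and> ys \<noteq> [] \<and> hd ys = hd xs
      \<and> last ys = last xs \<and> set ys \<subseteq> set xs"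
proof (induction "length xs" arbitrary: xs rule: less_induct)
  case less
  show ?case
  proof (cases "distinct xs")
    case True then show ?thesis using less.prems by blast
  next
    case False
    then obtain as y bs cs where xs: "xs = as @ [y] @ bs @ [y] @ cs"
      using not_distinct_decomp by blast
    let ?zs = "as @ [y] @ cs"
    have w0: "walk E (as @ (y # bs @ y # cs))" using less.prems(1) unfolding xs by simp
    have w2: "walk E (y # bs @ y # cs)" using w0 unfolding walk_append by simp
    have "walk E (y # cs)" using walk_append[of E "y#bs" "y#cs"] w2 by simp
    moreover have "walk E as" "as \<noteq> [] \<longrightarrow> {last as, y} \<in> E"
      using walk_append[of E as "y # bs @ y # cs"] w0 by auto
    ultimately have "walk E ?zs" using walk_append[of E as "y#cs"] by auto
    moreover have "length ?zs < length xs" unfolding xs by simp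
    ultimately obtain ys where "walk E ys \<and> distinct ys \<and> ys \<noteq> [] \<and> hd ys = hd ?zs
      \<and> last ys = last ?zs \<and> set ys \<subseteq> set ?zs" using less.hyps by blast
    moreover have "hd ?zs = hd xs" "last ?zs = last xs" "set ?zs \<subseteq> set xs"
      unfolding xs by (cases as; auto)+
    ultimately show ?thesis by (metis order_trans)
  qed
qed

lemma simple_edge: "simple_graph V E \<Longrightarrow> {a, b} \<in> E \<Longrightarrow> a \<in> V \<and> b \<in> V \<and> a \<noteq> b"
  unfolding simple_graph_def by (metis doubleton_eq_iff insert_absorb2)

lemma walk_in_V: "simple_graph V E \<Longrightarrow> walk E xs \<Longrightarrow> length xs \<ge> 2 \<Longrightarrow> set xs \<subseteq> V"
proof
  fix u assume sg: "simple_graph V E" and w: "walk E xs" and l: "length xs \<ge> 2" and u: "u \<in> set xs"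
  then obtain i where i: "i < length xs" "xs ! i = u" by (auto simp: in_set_conv_nth)
  show "u \<in> V"
  proof (cases "Suc i < length xs")
    case True
    then show ?thesis using w sg i simple_edge unfolding walk_def by metis
  next
    case False
    then have "Suc (i - 1) < length xs" "Suc (i-1) = i" using l i by auto
    then show ?thesis using w sg i simple_edge unfolding walk_def by metis
  qed
qed

lemma tree_W_aux:
  assumes T: "is_tree V E" and w: "walk E xs" and v: "v \<notin> set xs"
    and ij: "i < j" "j < length xs" and ab: "xs ! i \<noteq> xs ! j"
    and e1: "{v, xs!i} \<in> E" and e2: "{v, xs!j} \<in> E"
  shows False
proof -
  let ?s = "drop i (take (Suc j) xs)"
  have ws: "walk E ?s" using w by (intro walk_drop walk_take)
  have s0: "?s \<noteq> []" using ij by simp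
  have hs: "hd ?s = xs ! i" using ij by (simp add: hd_drop_conv_nth)
  have ls: "last ?s = xs ! j" using ij by (simp add: last_conv_nth)
  obtain ys where ys: "walk E ys" "distinct ys" "ys \<noteq> []" "hd ys = xs ! i" "last ys = xs ! j"
    "set ys \<subseteq> set ?s" using walk_reduce[OF ws s0] hs ls by auto
  have sg: "simple_graph V E" using T by (simp add: is_tree_def)
  have "set ?s \<subseteq> set xs" by (meson in_set_dropD in_set_takeD subsetI)
  then have vy: "v \<notin> set ys" using ys v by blast
  have ly: "length ys \<ge> 2"
  proof (rule ccontr)
    assume "\<not> length ys \<ge> 2"
    moreover have "length ys \<noteq> 0" using ys(3) by simp
    ultimately have "length ys = Suc 0" by arith
    then obtain z where "ys = [z]" by (auto simp: length_Suc_conv)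
    then show False using ys ab by simp
  qed
  have "is_cycle V E (ys @ [v])"
    unfolding is_cycle_def
  proof (intro conjI)
    show "3 \<le> length (ys @ [v])" using ly by simp
    show "distinct (ys @ [v])" using ys vy by simp
    show "set (ys @ [v]) \<subseteq> V" using walk_in_V[OF sg ys(1) ly] simple_edge[OF sg e1] by auto
    have "walk E (ys @ [v])" using ys e2 by (auto simp: walk_append insert_commute)
    then show "\<forall>i. Suc i < length (ys @ [v]) \<longrightarrow> {(ys @ [v]) ! i, (ys @ [v]) ! Suc i} \<in> E"
      unfolding walk_def by blast
    show "{last (ys @ [v]), hd (ys @ [v])} \<in> E" using ys e1 by simp
  qed
  then show False using T by (auto simp: is_tree_def)
qed

lemma tree_W:
  assumes T: "is_tree V E" and w: "walk E xs" and v: "v \<notin> set xs" and a: "a \<in> set xs"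
    and b: "b \<in> set xs" and ab: "a \<noteq> b" and va: "{v, a} \<in> E" and vb: "{v, b} \<in> E"
  shows False
proof -
  obtain i where i: "i < length xs" "xs ! i = a" using a by (auto simp: in_set_conv_nth)
  obtain j where j: "j < length xs" "xs ! j = b" using b by (auto simp: in_set_conv_nth)
  have "i < j \<or> j < i" using i j ab by (metis linorder_neqE_nat)
  then show False
  proof
    assume "i < j" then show False using tree_W_aux[OF T w v \<open>i<j\<close> j(1)] i j ab va vb by auto
  next
    assume "j < i" then show False using tree_W_aux[OF T w v \<open>j<i\<close> i(1)] i j ab va vb by auto
  qed
qed



definition lin :: "'a set \<Rightarrow> ('a \<times> 'a) set \<Rightarrow> bool" where
  "lin V lt \<longleftrightarrow> trans lt \<and> (\<forall>z. (z, z) \<notin> lt) \<and> (\<forall>a\<in>V. \<forall>b\<in>V. a \<noteq> b \<longrightarrow> (a, b) \<in> lt \<or> (b, a) \<in> lt)"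

definition SCc :: "'a set set \<Rightarrow> ('a \<times> 'a) set \<Rightarrow> ('a \<Rightarrow> bool) \<Rightarrow> bool" where
  "SCc E lt c \<longleftrightarrow> (\<forall>r s t. (r, s) \<in> lt \<longrightarrow> (s, t) \<in> lt \<longrightarrow> {r, t} \<in> E \<longrightarrow>
      (c r = c s \<longrightarrow> {s, t} \<in> E) \<and> (c s = c t \<longrightarrow> {r, s} \<in> E))"

lemma lin_converse: "lin V lt \<Longrightarrow> lin V (lt\<inverse>)"
  unfolding lin_def by (auto simp: trans_def)

lemma SCc_converse: "SCc E lt c \<Longrightarrow> SCc E (lt\<inverse>) c"
  unfolding SCc_def
proof (intro allI impI)
  fix r s t
  assume h: "\<forall>r s t. (r, s) \<in> lt \<longrightarrow> (s, t) \<in> lt \<longrightarrow> {r, t} \<in> E \<longrightarrow>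
      (c r = c s \<longrightarrow> {s, t} \<in> E) \<and> (c s = c t \<longrightarrow> {r, s} \<in> E)"
    and a: "(r, s) \<in> lt\<inverse>" "(s, t) \<in> lt\<inverse>" "{r, t} \<in> E"
  have "(t, s) \<in> lt" "(s, r) \<in> lt" "{t, r} \<in> E" using a by (auto simp: insert_commute)
  then have "(c t = c s \<longrightarrow> {s, r} \<in> E) \<and> (c s = c r \<longrightarrow> {t, s} \<in> E)" using h by blast
  then show "(c r = c s \<longrightarrow> {s, t} \<in> E) \<and> (c s = c t \<longrightarrow> {r, s} \<in> E)"
    by (auto simp: insert_commute)
qed

lemma cross_bool:
  "u \<in> set xs \<Longrightarrow> v \<in> set xs \<Longrightarrow> f u \<Longrightarrow> \<not> f v \<Longrightarrow> \<exists>i. Suc i < length xs \<and> f (xs ! i) \<noteq> f (xs ! Suc i)"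
proof (induction xs arbitrary: u v)
  case Nil then show ?case by simp
next
  case (Cons x xs)
  show ?case
  proof (cases xs)
    case Nil then show ?thesis using Cons.prems by auto
  next
    case (Cons y ys)
    show ?thesis
    proof (cases "f x = f y")
      case False then show ?thesis using Cons by (intro exI[of _ 0]) auto
    next
      case True
      have "\<exists>u' v'. u' \<in> set xs \<and> v' \<in> set xs \<and> f u' \<and> \<not> f v'"
        using Cons.prems True Cons by (cases "f x") auto
      then obtain u' v' where "u' \<in> set xs" "v' \<in> set xs" "f u'" "\<not> f v'" by blast
      from Cons.IH[OF this] obtain i where "Suc i < length xs" "f (xs ! i) \<noteq> f (xs ! Suc i)" by blast
      then show ?thesis by (intro exI[of _ "Suc i"]) auto
    qed
  qed
qed

lemma cross_edge:
  assumes L: "lin V lt" and w: "walk E xs" and sV: "set xs \<subseteq> V" and m: "m \<notin> set xs" "m \<in> V"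
    and u: "u \<in> set xs" "(u, m) \<in> lt" and v: "v \<in> set xs" "(m, v) \<in> lt"
  shows "\<exists>a b. a \<in> set xs \<and> b \<in> set xs \<and> {a, b} \<in> E \<and> (a, m) \<in> lt \<and> (m, b) \<in> lt"
proof -
  have irr: "\<And>z. (z, z) \<notin> lt" and tr: "trans lt"
    and tot: "\<And>a b. a \<in> V \<Longrightarrow> b \<in> V \<Longrightarrow> a \<noteq> b \<Longrightarrow> (a, b) \<in> lt \<or> (b, a) \<in> lt"
    using L unfolding lin_def by auto
  have nv: "(v, m) \<notin> lt" using v irr tr by (meson transD)
  obtain i where i: "Suc i < length xs" "((xs ! i, m) \<in> lt) \<noteq> ((xs ! Suc i, m) \<in> lt)"
    using cross_bool[of u xs v "\<lambda>z. (z, m) \<in> lt"] u v nv by blast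
  have inx: "xs ! i \<in> set xs" "xs ! Suc i \<in> set xs" using i by auto
  have e: "{xs ! i, xs ! Suc i} \<in> E" using w i unfolding walk_def by blast
  have side: "\<And>z. z \<in> set xs \<Longrightarrow> (z, m) \<notin> lt \<Longrightarrow> (m, z) \<in> lt"
    using tot sV m by (metis subsetD)
  show ?thesis
  proof (cases "(xs ! i, m) \<in> lt")
    case True
    then have "(xs ! Suc i, m) \<notin> lt" using i by simp
    then have "(m, xs ! Suc i) \<in> lt" using side inx by blast
    then show ?thesis using True inx e by blast
  next
    case False
    then have "(xs ! Suc i, m) \<in> lt" using i by simp
    moreover have "(m, xs ! i) \<in> lt" using side inx False by blast
    moreover have "{xs ! Suc i, xs ! i} \<in> E" using e by (simp add: insert_commute)
    ultimately show ?thesis using inx by blast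
  qed
qed

lemma core1:
  assumes T: "is_tree V E" and L: "lin V lt" and SC: "SCc E lt c"
    and nb: "\<And>n. n \<in> N \<Longrightarrow> n \<in> V \<and> {v, n} \<in> E"
    and N: "n1 \<in> N" "n2 \<in> N" "n3 \<in> N" "n4 \<in> N" "distinct [n1, n2, n3, n4]"
    and V: "x \<in> V" "y \<in> V" "v \<in> V" and o: "(x, v) \<in> lt" "(v, y) \<in> lt"
    and e: "{x, y} \<in> E" "{v, x} \<notin> E" "{v, y} \<notin> E"
  shows False
proof -
  have irr: "\<And>z. (z, z) \<notin> lt" and tr: "trans lt"
    and tot: "\<And>a b. a \<in> V \<Longrightarrow> b \<in> V \<Longrightarrow> a \<noteq> b \<Longrightarrow> (a, b) \<in> lt \<or> (b, a) \<in> lt"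
    using L unfolding lin_def by auto
  have trr: "\<And>a b d. (a, b) \<in> lt \<Longrightarrow> (b, d) \<in> lt \<Longrightarrow> (a, d) \<in> lt" using tr by (meson transD)
  have sg: "simple_graph V E" using T by (simp add: is_tree_def)
  have loop: "\<And>u. {u, u} \<notin> E" using simple_edge[OF sg] by blast
  have sc: "\<And>r s t. (r, s) \<in> lt \<Longrightarrow> (s, t) \<in> lt \<Longrightarrow> {r, t} \<in> E \<Longrightarrow>
      (c r = c s \<longrightarrow> {s, t} \<in> E) \<and> (c s = c t \<longrightarrow> {r, s} \<in> E)"
    using SC unfolding SCc_def by blast
  have W2: "\<And>a b. a \<in> N \<Longrightarrow> b \<in> N \<Longrightarrow> a \<noteq> b \<Longrightarrow> {a, b} \<notin> E"
  proof
    fix a b assume a: "a \<in> N" and b: "b \<in> N" and ab: "a \<noteq> b" and "{a, b} \<in> E"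
    moreover have "v \<noteq> a" "v \<noteq> b" using nb[OF a] nb[OF b] loop by auto
    ultimately show False using tree_W[OF T, of "[a, b]" v a b] nb[OF a] nb[OF b] by auto
  qed
  have vx: "v \<noteq> x" "v \<noteq> y" using o irr by auto
  have cxv: "c x \<noteq> c v" and cyv: "c y \<noteq> c v"
    using sc[OF o e(1)] e by (auto simp: insert_commute)
  have good: "c n = c v" if n: "n \<in> N" and nx: "{n, x} \<notin> E" and ny: "{n, y} \<notin> E" for n
  proof -
    have nV: "n \<in> V" and nv: "{v, n} \<in> E" using nb[OF n] by auto
    have ne: "n \<noteq> x" "n \<noteq> y" "n \<noteq> v" using nv e loop by auto
    consider "(n, x) \<in> lt" | "(x, n) \<in> lt" "(n, y) \<in> lt" | "(y, n) \<in> lt"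
      using tot[OF nV V(1) ne(1)] tot[OF nV V(2) ne(2)] by blast
    then show ?thesis
    proof cases
      case 1
      have "c n \<noteq> c x" using sc[OF 1 o(1)] nv e by (auto simp: insert_commute)
      then show ?thesis using cxv by auto
    next
      case 2
      have "c n \<noteq> c x" using sc[OF 2(1) 2(2) e(1)] ny by (auto simp: insert_commute)
      then show ?thesis using cxv by auto
    next
      case 3
      have "c n \<noteq> c y" using sc[OF o(2) 3] nv e by (auto simp: insert_commute)
      then show ?thesis using cyv by auto
    qed
  qed
  have up0: "False" if "a \<in> N" "b \<in> N" "a \<noteq> b" "c a = c v" "(v, a) \<in> lt" "(a, b) \<in> lt" for a b
    using sc[OF that(5) that(6)] nb that W2 by auto
  have up: "False" if "a \<in> N" "b \<in> N" "a \<noteq> b" "c a = c v" "c b = c v" "(v, a) \<in> lt" "(v, b) \<in> lt" for a b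
  proof (cases "(a, b) \<in> lt")
    case True then show False using up0[of a b] that by blast
  next
    case False
    then have "(b, a) \<in> lt" using tot[of a b] nb that by blast
    then show False using up0[of b a] that by blast
  qed
  have down0: "False" if "a \<in> N" "b \<in> N" "a \<noteq> b" "c b = c v" "(b, v) \<in> lt" "(a, b) \<in> lt" for a b
    using sc[OF that(6) that(5)] nb that W2 by (auto simp: insert_commute)
  have down: "False" if "a \<in> N" "b \<in> N" "a \<noteq> b" "c a = c v" "c b = c v" "(a, v) \<in> lt" "(b, v) \<in> lt" for a b
  proof (cases "(a, b) \<in> lt")
    case True then show False using down0[of a b] that by blast
  next
    case False
    then have "(b, a) \<in> lt" using tot[of a b] nb that by blast
    then show False using down0[of b a] that by blast
  qed
  have side: "(v, n) \<in> lt \<or> (n, v) \<in> lt" if "n \<in> N" for n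
  proof -
    have "v \<noteq> n" using nb[OF that] loop by auto
    then show ?thesis using tot[of v n] nb[OF that] V by blast
  qed
  have three: False if "a \<in> N" "b \<in> N" "d \<in> N" "distinct [a, b, d]"
     "c a = c v" "c b = c v" "c d = c v" for a b d
  proof -
    have d: "a \<noteq> b" "a \<noteq> d" "b \<noteq> d" using that(4) by auto
    show False using side[OF that(1)] side[OF that(2)] side[OF that(3)]
      up[OF that(1) that(2) d(1) that(5) that(6)] up[OF that(1) that(3) d(2) that(5) that(7)]
      up[OF that(2) that(3) d(3) that(6) that(7)]
      down[OF that(1) that(2) d(1) that(5) that(6)] down[OF that(1) that(3) d(2) that(5) that(7)]
      down[OF that(2) that(3) d(3) that(6) that(7)] by blast
  qed
  have bad: False if a: "a \<in> N" and b: "b \<in> N" and ab: "a \<noteq> b"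
    and ba: "{a, x} \<in> E \<or> {a, y} \<in> E" and bb: "{b, x} \<in> E \<or> {b, y} \<in> E" for a b
  proof -
    have va: "v \<noteq> a" "v \<noteq> b" using nb[OF a] nb[OF b] loop by auto
    have ea: "{v, a} \<in> E" "{v, b} \<in> E" using nb a b by auto
    show False
    proof (cases "{a, x} \<in> E")
      case True
      show False
      proof (cases "{b, x} \<in> E")
        case True
        then show False using tree_W[OF T, of "[a, x, b]" v a b] \<open>{a,x} \<in> E\<close> va vx ea ab
          by (auto simp: insert_commute)
      next
        case False
        then have "{b, y} \<in> E" using bb by blast
        then show False using tree_W[OF T, of "[a, x, y, b]" v a b] \<open>{a,x} \<in> E\<close> e va vx ea ab
          by (auto simp: insert_commute)
      qed
    next
      case False
      then have ay: "{a, y} \<in> E" using ba by blast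
      show False
      proof (cases "{b, x} \<in> E")
        case True
        then show False using tree_W[OF T, of "[a, y, x, b]" v a b] ay e va vx ea ab
          by (auto simp: insert_commute)
      next
        case False
        then have "{b, y} \<in> E" using bb by blast
        then show False using tree_W[OF T, of "[a, y, b]" v a b] ay va vx ea ab
          by (auto simp: insert_commute)
      qed
    qed
  qed
  let ?B = "\<lambda>n. {n, x} \<in> E \<or> {n, y} \<in> E"
  have g: "\<not> ?B n \<Longrightarrow> n \<in> N \<Longrightarrow> c n = c v" for n using good by blast
  have nd: "n1 \<noteq> n2" "n1 \<noteq> n3" "n1 \<noteq> n4" "n2 \<noteq> n3" "n2 \<noteq> n4" "n3 \<noteq> n4"
    using N(5) by auto
  have d3: "distinct [n2, n3, n4]" "distinct [n1, n3, n4]" "distinct [n1, n2, n4]" "distinct [n1, n2, n3]"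
    using N(5) by auto
  have b12: "\<not> (?B n1 \<and> ?B n2)" using bad[OF N(1) N(2) nd(1)] by blast
  have b13: "\<not> (?B n1 \<and> ?B n3)" using bad[OF N(1) N(3) nd(2)] by blast
  have b14: "\<not> (?B n1 \<and> ?B n4)" using bad[OF N(1) N(4) nd(3)] by blast
  have b23: "\<not> (?B n2 \<and> ?B n3)" using bad[OF N(2) N(3) nd(4)] by blast
  have b24: "\<not> (?B n2 \<and> ?B n4)" using bad[OF N(2) N(4) nd(5)] by blast
  have b34: "\<not> (?B n3 \<and> ?B n4)" using bad[OF N(3) N(4) nd(6)] by blast
  have t1: "\<not> (\<not> ?B n2 \<and> \<not> ?B n3 \<and> \<not> ?B n4)"
    using three[OF N(2) N(3) N(4) d3(1)] g[OF _ N(2)] g[OF _ N(3)] g[OF _ N(4)] by blast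
  have t2: "\<not> (\<not> ?B n1 \<and> \<not> ?B n3 \<and> \<not> ?B n4)"
    using three[OF N(1) N(3) N(4) d3(2)] g[OF _ N(1)] g[OF _ N(3)] g[OF _ N(4)] by blast
  have t3: "\<not> (\<not> ?B n1 \<and> \<not> ?B n2 \<and> \<not> ?B n4)"
    using three[OF N(1) N(2) N(4) d3(3)] g[OF _ N(1)] g[OF _ N(2)] g[OF _ N(4)] by blast
  have t4: "\<not> (\<not> ?B n1 \<and> \<not> ?B n2 \<and> \<not> ?B n3)"
    using three[OF N(1) N(2) N(3) d3(4)] g[OF _ N(1)] g[OF _ N(2)] g[OF _ N(3)] by blast
  show False using b12 b13 b14 b23 b24 b34 t1 t2 t3 t4 by blast
qed



lemma core2:
  assumes T: "is_tree V E" and L: "lin V lt" and SC: "SCc E lt c"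
    and nb: "\<And>n. n \<in> N \<Longrightarrow> n \<in> V \<and> {v, n} \<in> E \<and> n \<noteq> y \<and> {n, y} \<notin> E \<and> n \<notin> set p
               \<and> (\<forall>u\<in>set p. {n, u} \<notin> E)"
    and N: "n1 \<in> N" "n2 \<in> N" "n3 \<in> N" "distinct [n1, n2, n3]"
    and V: "v \<in> V" "z \<in> V" "y \<in> V" and o: "(z, v) \<in> lt" "(v, y) \<in> lt"
    and e: "{v, z} \<in> E" "{z, y} \<in> E" "{v, y} \<notin> E"
    and p: "walk E p" "set p \<subseteq> V" "z \<in> set p" "v1 \<in> set p" "v1 \<noteq> z"
      "\<forall>u\<in>set p. (u, v) \<in> lt" "\<forall>u\<in>set p. u \<noteq> z \<longrightarrow> {v, u} \<notin> E"
  shows False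
proof -
  have irr: "\<And>z. (z, z) \<notin> lt" and tr: "trans lt"
    and tot: "\<And>a b. a \<in> V \<Longrightarrow> b \<in> V \<Longrightarrow> a \<noteq> b \<Longrightarrow> (a, b) \<in> lt \<or> (b, a) \<in> lt"
    using L unfolding lin_def by auto
  have trr: "\<And>a b d. (a, b) \<in> lt \<Longrightarrow> (b, d) \<in> lt \<Longrightarrow> (a, d) \<in> lt" using tr by (meson transD)
  have sg: "simple_graph V E" using T by (simp add: is_tree_def)
  have loop: "\<And>u. {u, u} \<notin> E" using simple_edge[OF sg] by blast
  have sc: "\<And>r s t. (r, s) \<in> lt \<Longrightarrow> (s, t) \<in> lt \<Longrightarrow> {r, t} \<in> E \<Longrightarrow>
      (c r = c s \<longrightarrow> {s, t} \<in> E) \<and> (c s = c t \<longrightarrow> {r, s} \<in> E)"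
    using SC unfolding SCc_def by blast
  have W2: "\<And>a b. a \<in> N \<Longrightarrow> b \<in> N \<Longrightarrow> a \<noteq> b \<Longrightarrow> {a, b} \<notin> E"
  proof
    fix a b assume a: "a \<in> N" and b: "b \<in> N" and ab: "a \<noteq> b" and "{a, b} \<in> E"
    moreover have "v \<noteq> a" "v \<noteq> b" using nb[OF a] nb[OF b] loop by auto
    ultimately show False using tree_W[OF T, of "[a, b]" v a b] nb[OF a] nb[OF b] by auto
  qed
  have nz: "{n, z} \<notin> E" if "n \<in> N" for n using nb[OF that] p(3) by blast
  have cz: "c z \<noteq> c v" using sc[OF o e(2)] e by (auto simp: insert_commute)
  have mid: False if n: "n \<in> N" and o1: "(z, n) \<in> lt" and o2: "(n, v) \<in> lt" for n
  proof -
    have "c n \<noteq> c v" using sc[OF o1 o2] e nz[OF n] by (auto simp: insert_commute)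
    then have "c n = c z" using cz by auto
    moreover have "(n, y) \<in> lt" using trr[OF o2 o(2)] .
    ultimately show False using sc[OF o1 _ e(2)] nb[OF n] by auto
  qed
  have up0: False if a: "a \<in> N" and b: "b \<in> N" and ab: "a \<noteq> b" and o1: "(v, a) \<in> lt"
    and o2: "(a, b) \<in> lt" for a b
  proof -
    have "c a \<noteq> c v" using sc[OF o1 o2] nb[OF b] W2[OF a b ab] by auto
    then have ca: "c a = c z" using cz by auto
    have ay: "a \<noteq> y" using nb[OF a] by blast
    have aV: "a \<in> V" using nb[OF a] by blast
    consider "(a, y) \<in> lt" | "(y, a) \<in> lt" using tot[OF aV V(3) ay] by blast
    then show False
    proof cases
      case 1
      have "(z, a) \<in> lt" using trr[OF o(1) o1] .
      then show False using sc[OF _ 1 e(2)] ca nb[OF a] by auto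
    next
      case 2
      have "c y \<noteq> c v" "c y \<noteq> c a" using sc[OF o(2) 2] nb[OF a] e by (auto simp: insert_commute)
      then show False using \<open>c a \<noteq> c v\<close> by auto
    qed
  qed
  have up: False if a: "a \<in> N" and b: "b \<in> N" and ab: "a \<noteq> b" and "(v, a) \<in> lt" "(v, b) \<in> lt" for a b
  proof (cases "(a, b) \<in> lt")
    case True then show False using up0[of a b] that by blast
  next
    case False
    then have "(b, a) \<in> lt" using tot[of a b] nb that by blast
    then show False using up0[of b a] that by blast
  qed
  have below0: False if a: "a \<in> N" and b: "b \<in> N" and o1: "(a, b) \<in> lt" and o2: "(b, z) \<in> lt" for a b
  proof -
    have bv: "(b, v) \<in> lt" using trr[OF o2 o(1)] .
    have ab: "a \<noteq> b" using o1 irr by auto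
    have av: "{a, v} \<in> E" using nb[OF a] by (simp add: insert_commute)
    have cb: "c b \<noteq> c v" using sc[OF o1 bv av] W2[OF a b ab] by auto
    have bV: "b \<in> V" using nb[OF b] by blast
    have v1V: "v1 \<in> V" using p by blast
    have bv1: "b \<noteq> v1" using nb[OF b] p(4) by blast
    have bve: "{b, v} \<in> E" using nb[OF b] by (simp add: insert_commute)
    consider "(b, v1) \<in> lt" | "(v1, b) \<in> lt" using tot[OF bV v1V bv1] by blast
    then show False
    proof cases
      case 1
      have "(v1, v) \<in> lt" using p(4) p(6) by blast
      moreover have "{v, v1} \<notin> E" using p(4,5,7) by blast
      moreover have "{b, v1} \<notin> E" using nb[OF b] p(4) by blast
      ultimately have "c b \<noteq> c v1" "c v1 \<noteq> c v" using sc[OF 1 _ bve] by (auto simp: insert_commute)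
      then show False using cb by auto
    next
      case 2
      have bn: "b \<notin> set p" using nb[OF b] by blast
      obtain a' m where am: "a' \<in> set p" "m \<in> set p" "{a', m} \<in> E" "(a', b) \<in> lt" "(b, m) \<in> lt"
        using cross_edge[OF L p(1) p(2) bn bV p(4) 2 p(3) o2] by blast
      have nbm: "{b, m} \<notin> E" "{a', b} \<notin> E" using nb[OF b] am by (auto simp: insert_commute)
      have "c b \<noteq> c m" using sc[OF am(4) am(5) am(3)] nbm by auto
      moreover have "(m, v) \<in> lt" using am(2) p(6) by blast
      then have "c m \<noteq> c v" using sc[OF am(5) _ bve] nbm by auto
      ultimately show False using cb by auto
    qed
  qed
  have below: False if a: "a \<in> N" and b: "b \<in> N" and ab: "a \<noteq> b" and "(a, z) \<in> lt" "(b, z) \<in> lt" for a b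
  proof (cases "(a, b) \<in> lt")
    case True then show False using below0[of a b] that by blast
  next
    case False
    then have "(b, a) \<in> lt" using tot[of a b] nb that by blast
    then show False using below0[of b a] that by blast
  qed
  have side: "(v, n) \<in> lt \<or> (n, z) \<in> lt" if n: "n \<in> N" for n
  proof -
    have nV: "n \<in> V" using nb[OF n] by blast
    have "n \<noteq> v" using nb[OF n] loop by auto
    moreover have "n \<noteq> z" using nb[OF n] p(3) by auto
    ultimately show ?thesis using tot[OF V(1) nV] tot[OF nV V(2)] mid[OF n] by blast
  qed
  have d: "n1 \<noteq> n2" "n1 \<noteq> n3" "n2 \<noteq> n3" using N(4) by auto
  show False using side[OF N(1)] side[OF N(2)] side[OF N(3)]
    up[OF N(1) N(2) d(1)] up[OF N(1) N(3) d(2)] up[OF N(2) N(3) d(3)]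
    below[OF N(1) N(2) d(1)] below[OF N(1) N(3) d(2)] below[OF N(2) N(3) d(3)] by blast
qed



lemma four_elems:
  assumes "4 \<le> card A"
  shows "\<exists>a b c d. a \<in> A \<and> b \<in> A \<and> c \<in> A \<and> d \<in> A \<and> distinct [a, b, c, d]"
proof -
  obtain T where T: "T \<subseteq> A" "card T = 4" using obtain_subset_with_card_n[OF assms] by blast
  then have "card T = Suc (Suc (Suc (Suc 0)))" by simp
  then obtain a b c d where "T = {a, b, c, d}" "distinct [a, b, c, d]"
    unfolding card_Suc_eq by auto
  then show ?thesis using T(1) by auto
qed

lemma path_facts:
  assumes "simple_path V E x y p" "x \<noteq> y"
  shows "walk E p" "hd p = x" "last p = y" "distinct p" "set p \<subseteq> V" "p = x # tl p" "tl p \<noteq> []"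
    "last (tl p) = y" "x \<notin> set (tl p)" "{x, hd (tl p)} \<in> E" "x \<in> set p" "y \<in> set p"
    "y \<in> set (tl p)" "hd (tl p) \<in> set (tl p)"
proof -
  have p: "p \<noteq> []" "hd p = x" "last p = y" "distinct p" "set p \<subseteq> V" "walk E p"
    using assms(1) unfolding simple_path_def walk_def by auto
  show "walk E p" "hd p = x" "last p = y" "distinct p" "set p \<subseteq> V" using p by auto
  show px: "p = x # tl p" using p by (cases p) auto
  show tl: "tl p \<noteq> []" using p assms(2) by (cases p) auto
  show "last (tl p) = y" using p tl by (cases p) auto
  show "x \<notin> set (tl p)" using p px by (metis distinct.simps(2))
  obtain t ts where "tl p = t # ts" using tl by (cases "tl p") auto
  then show "{x, hd (tl p)} \<in> E" using p px by (metis list.sel(1) walk_Cons2)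
  show "x \<in> set p" using px by (metis list.set_intros(1))
  show "y \<in> set (tl p)" using \<open>last (tl p) = y\<close> tl by auto
  then show "y \<in> set p" using px by (metis list.set_intros(2))
  show "hd (tl p) \<in> set (tl p)" using tl by simp
qed

lemma noadj:
  assumes T: "is_tree V E" and P: "simple_path V E v0 a p" and P2: "simple_path V E v0 v2 p2"
    and ne: "v0 \<noteq> a" "v0 \<noteq> v2" and dj: "(set p - {v0}) \<inter> (set p2 - {v0}) = {}"
    and v2: "v2 \<notin> set p" and q: "q \<in> set p" "q \<noteq> v0"
  shows "{v2, q} \<notin> E"
proof
  assume qe: "{v2, q} \<in> E"
  note pf = path_facts[OF P ne(1)] and pf2 = path_facts[OF P2 ne(2)]
  let ?b = "butlast p2"
  have p2eq: "p2 = ?b @ [v2]" using pf2 by (metis append_butlast_last_id list.distinct(1))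
  have bne: "?b \<noteq> []" using pf2(6,7) by (metis butlast.simps(2) list.distinct(1))
  have hb: "hd ?b = v0" using pf2(6,7) by (metis butlast.simps(2) list.sel(1))
  have wb: "walk E ?b" using pf2(1) by (rule walk_butlast)
  have we: "{last ?b, v2} \<in> E" using pf2(1) p2eq bne walk_append[of E ?b "[v2]"] by auto
  let ?xs = "rev (tl p) @ ?b"
  have wx: "walk E ?xs" unfolding walk_append
    using walk_tl[OF pf(1)] wb bne pf(7,10) hb by (auto simp: last_rev insert_commute)
  have v2b: "v2 \<notin> set ?b" using pf2(4) p2eq by (metis distinct_append not_distinct_conv_prefix)
  have "set (tl p) \<subseteq> set p" using pf(6) by (metis set_subset_Cons)
  then have v2x: "v2 \<notin> set ?xs" using v2 v2b by auto
  have qx: "q \<in> set ?xs" using q pf(6) by (metis UnI1 set_ConsD set_append set_rev)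
  have wxs: "last ?b \<in> set ?xs" using bne by simp
  have wp2: "last ?b \<in> set p2" using bne by (metis in_set_butlastD last_in_set)
  have "q \<noteq> last ?b" using dj wp2 q by blast
  then show False using tree_W[OF T wx v2x qx wxs _ qe] we by (auto simp: insert_commute)
qed

lemma nbrfar:
  assumes T: "is_tree V E" and P: "simple_path V E v0 a p" and ne: "v0 \<noteq> a"
    and e0: "{v2, v0} \<in> E" and v2: "v2 \<notin> set p" and na: "\<forall>q\<in>set p. q \<noteq> v0 \<longrightarrow> {v2, q} \<notin> E"
    and n: "{v2, n} \<in> E" "n \<noteq> v0"
  shows "n \<notin> set p \<and> (\<forall>u\<in>set p. {n, u} \<notin> E)"
proof -
  note pf = path_facts[OF P ne]
  have sg: "simple_graph V E" using T by (simp add: is_tree_def)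
  have loop: "\<And>u. {u, u} \<notin> E" using simple_edge[OF sg] by blast
  have "n \<notin> set p" using na n by blast
  moreover have "{n, u} \<notin> E" if u: "u \<in> set p" for u
  proof
    assume nu: "{n, u} \<in> E"
    obtain k where k: "k < length p" "p ! k = u" using u by (auto simp: in_set_conv_nth)
    let ?xs = "take (Suc k) p @ [n]"
    have lt: "last (take (Suc k) p) = u" using k by (simp add: take_Suc_conv_app_nth)
    have wx: "walk E ?xs" unfolding walk_append using walk_take[OF pf(1)] lt nu
      by (auto simp: insert_commute)
    have "v0 \<in> set ?xs" using pf(6) by (metis append_Cons set_ConsD take_Suc_Cons list.set_intros(1))
    moreover have "n \<in> set ?xs" by simp
    moreover have "v2 \<notin> set ?xs" using v2 n loop by (auto dest: in_set_takeD)
    ultimately show False using tree_W[OF T wx, of v2 n v0] n e0 by auto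
  qed
  ultimately show ?thesis by blast
qed

lemma crossA:
  assumes T: "is_tree V E" and L: "lin V lt" and SC: "SCc E lt c"
    and nbs: "n1 \<in> V" "n2 \<in> V" "n3 \<in> V" "n4 \<in> V" "{v2, n1} \<in> E" "{v2, n2} \<in> E" "{v2, n3} \<in> E"
      "{v2, n4} \<in> E" "distinct [n1, n2, n3, n4]"
    and v2V: "v2 \<in> V" and w: "walk E p" "set p \<subseteq> V" "v2 \<notin> set p" "\<forall>q\<in>set p. {v2, q} \<notin> E"
    and ab: "a \<in> set p" "b \<in> set p" "(a, v2) \<in> lt" "(v2, b) \<in> lt"
  shows False
proof -
  obtain x y where xy: "x \<in> set p" "y \<in> set p" "{x, y} \<in> E" "(x, v2) \<in> lt" "(v2, y) \<in> lt"
    using cross_edge[OF L w(1) w(2) w(3) v2V ab(1) ab(3) ab(2) ab(4)] by blast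
  let ?N = "{u \<in> V. {v2, u} \<in> E}"
  have N: "n1 \<in> ?N" "n2 \<in> ?N" "n3 \<in> ?N" "n4 \<in> ?N" using nbs by auto
  have xyV: "x \<in> V" "y \<in> V" using xy w(2) by auto
  have ne: "{v2, x} \<notin> E" "{v2, y} \<notin> E" using w(4) xy by auto
  show False
    using core1[OF T L SC _ N nbs(9) xyV v2V xy(4) xy(5) xy(3) ne] by blast
qed

lemma allside:
  assumes T: "is_tree V E" and L: "lin V lt" and SC: "SCc E lt c"
    and nbs: "n1 \<in> V" "n2 \<in> V" "n3 \<in> V" "n4 \<in> V" "{v2, n1} \<in> E" "{v2, n2} \<in> E" "{v2, n3} \<in> E"
      "{v2, n4} \<in> E" "distinct [n1, n2, n3, n4]"
    and v2V: "v2 \<in> V" and P: "simple_path V E v0 a p" and ne: "v0 \<noteq> a" and v2: "v2 \<notin> set p"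
    and na: "\<forall>q\<in>set p. q \<noteq> v0 \<longrightarrow> {v2, q} \<notin> E" and a: "(a, v2) \<in> lt"
    and u: "u \<in> set (tl p)"
  shows "(u, v2) \<in> lt"
proof (rule ccontr)
  assume nu: "(u, v2) \<notin> lt"
  note pf = path_facts[OF P ne]
  have tot: "\<And>a b. a \<in> V \<Longrightarrow> b \<in> V \<Longrightarrow> a \<noteq> b \<Longrightarrow> (a, b) \<in> lt \<or> (b, a) \<in> lt"
    using L unfolding lin_def by auto
  have sub: "set (tl p) \<subseteq> set p" using pf(6) by (metis set_subset_Cons)
  have uV: "u \<in> V" using u sub pf(5) by blast
  have "u \<noteq> v2" using u sub v2 by blast
  then have vu: "(v2, u) \<in> lt" using tot[OF uV v2V] nu by blast
  have na': "\<forall>q\<in>set (tl p). {v2, q} \<notin> E"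
  proof
    fix q assume q: "q \<in> set (tl p)"
    then have "q \<in> set p" "q \<noteq> v0" using sub pf(9) by auto
    then show "{v2, q} \<notin> E" using na by simp
  qed
  show False
    using crossA[OF T L SC nbs v2V walk_tl[OF pf(1)] _ _ na' pf(13) u a vu] sub pf(5) v2 by blast
qed



lemma three_of_four:
  assumes "distinct [n1, n2, n3, n4]"
  shows "\<exists>x y w. x \<in> {n1, n2, n3, n4} \<and> y \<in> {n1, n2, n3, n4} \<and> w \<in> {n1, n2, n3, n4}
     \<and> distinct [x, y, w] \<and> x \<noteq> z \<and> y \<noteq> z \<and> w \<noteq> z"
proof (cases "z = n1")
  case True then show ?thesis using assms by (intro exI[of _ n2] exI[of _ n3] exI[of _ n4]) auto
next
  case F1: False
  show ?thesis
  proof (cases "z = n2")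
    case True then show ?thesis using assms by (intro exI[of _ n1] exI[of _ n3] exI[of _ n4]) auto
  next
    case F2: False
    show ?thesis
    proof (cases "z = n3")
      case True then show ?thesis using assms by (intro exI[of _ n1] exI[of _ n2] exI[of _ n4]) auto
    next
      case False then show ?thesis using assms F1 F2 by (intro exI[of _ n1] exI[of _ n2] exI[of _ n3]) auto
    qed
  qed
qed

lemma caseB:
  assumes T: "is_tree V E" and L: "lin V lt" and SC: "SCc E lt c"
    and nbs: "n1 \<in> V" "n2 \<in> V" "n3 \<in> V" "n4 \<in> V" "{v2, n1} \<in> E" "{v2, n2} \<in> E" "{v2, n3} \<in> E"
      "{v2, n4} \<in> E" "distinct [n1, n2, n3, n4]"
    and v2V: "v2 \<in> V" and v0V: "v0 \<in> V"
    and P: "simple_path V E v0 a p" and Q: "simple_path V E v0 b q" and nea: "v0 \<noteq> a" and neb: "v0 \<noteq> b"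
    and oa: "(a, v2) \<in> lt" and ob: "(v2, b) \<in> lt" and o0: "(v0, v2) \<in> lt" and e0: "{v2, v0} \<in> E"
    and v2p: "v2 \<notin> set p" and v2q: "v2 \<notin> set q"
    and nap: "\<forall>u\<in>set p. u \<noteq> v0 \<longrightarrow> {v2, u} \<notin> E" and naq: "\<forall>u\<in>set q. u \<noteq> v0 \<longrightarrow> {v2, u} \<notin> E"
  shows False
proof -
  note pf = path_facts[OF P nea] and qf = path_facts[OF Q neb]
  let ?y = "hd (tl q)"
  have tailp: "(u, v2) \<in> lt" if "u \<in> set (tl p)" for u
    using allside[OF T L SC nbs v2V P nea v2p nap oa that] .
  have tailq: "(u, v2) \<in> lt\<inverse>" if "u \<in> set (tl q)" for u
    using allside[OF T lin_converse[OF L] SCc_converse[OF SC] nbs v2V Q neb v2q naq _ that] ob by simp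
  have oy: "(v2, ?y) \<in> lt" using tailq[OF qf(14)] by simp
  have sq: "set (tl q) \<subseteq> set q" using qf(6) by (metis set_subset_Cons)
  have yq: "?y \<in> set q" using qf(14) sq by blast
  have yV: "?y \<in> V" using yq qf(5) by blast
  have yne: "?y \<noteq> v0" using qf(9) qf(14) by metis
  have nay: "{v2, ?y} \<notin> E" using naq yq yne by simp
  have allp: "\<forall>u\<in>set p. (u, v2) \<in> lt"
  proof
    fix u assume "u \<in> set p"
    then have "u = v0 \<or> u \<in> set (tl p)" using pf(6) by (metis set_ConsD)
    then show "(u, v2) \<in> lt" using o0 tailp by blast
  qed
  let ?N = "{u \<in> V. {v2, u} \<in> E \<and> u \<noteq> v0}"
  obtain x y w where xyw: "x \<in> {n1, n2, n3, n4}" "y \<in> {n1, n2, n3, n4}" "w \<in> {n1, n2, n3, n4}"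
     "distinct [x, y, w]" "x \<noteq> v0" "y \<noteq> v0" "w \<noteq> v0"
    using three_of_four[OF nbs(9), of v0] by blast
  have N: "x \<in> ?N" "y \<in> ?N" "w \<in> ?N" using xyw nbs by auto
  have nb: "n \<in> V \<and> {v2, n} \<in> E \<and> n \<noteq> ?y \<and> {n, ?y} \<notin> E \<and> n \<notin> set p \<and> (\<forall>u\<in>set p. {n, u} \<notin> E)"
    if n: "n \<in> ?N" for n
  proof -
    have n1: "n \<in> V" "{v2, n} \<in> E" "n \<noteq> v0" using n by auto
    have fp: "n \<notin> set p \<and> (\<forall>u\<in>set p. {n, u} \<notin> E)" using nbrfar[OF T P nea e0 v2p nap n1(2,3)] .
    have fq: "n \<notin> set q \<and> (\<forall>u\<in>set q. {n, u} \<notin> E)" using nbrfar[OF T Q neb e0 v2q naq n1(2,3)] .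
    have "n \<noteq> ?y" using fq yq by blast
    moreover have "{n, ?y} \<notin> E" using fq yq by blast
    ultimately show ?thesis using n1 fp by blast
  qed
  show False
    using core2[OF T L SC nb N xyw(4) v2V v0V yV o0 oy e0 qf(10) nay pf(1) pf(5) pf(11) pf(12) nea[symmetric]
      allp nap] .
qed



theorem corollaryA8:
  fixes V :: "'a set" and E :: "'a set set" and lt :: "('a \<times> 'a) set" and S :: "'a set set"
  assumes "is_tree V E"
    and "pthin V E = 2"
    and "vertex_ordering V lt"
    and "partition_on V S" and "card S = 2"
    and "strongly_consistent V E lt S"
    and "v1 \<in> V" and "v2 \<in> V" and "v3 \<in> V"
    and "(v1, v2) \<in> lt" and "(v2, v3) \<in> lt"
    and "degree V E v2 \<ge> 4"
  shows "\<not> (\<exists>v0. nexus V E v0 v1 v2 v3)"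
proof
  assume "\<exists>v0. nexus V E v0 v1 v2 v3"
  then obtain v0 p1 p2 p3 where dist: "distinct [v0, v1, v2, v3]" and sub: "{v0, v1, v2, v3} \<subseteq> V"
    and P1: "simple_path V E v0 v1 p1" and P2: "simple_path V E v0 v2 p2" and P3: "simple_path V E v0 v3 p3"
    and d12: "(set p1 - {v0}) \<inter> (set p2 - {v0}) = {}"
    and d13: "(set p1 - {v0}) \<inter> (set p3 - {v0}) = {}"
    and d23: "(set p2 - {v0}) \<inter> (set p3 - {v0}) = {}"
    unfolding nexus_def by blast
  note T = assms(1)
  have L: "lin V lt" using assms(3)
    unfolding vertex_ordering_def strict_linear_order_on_def lin_def irrefl_def total_on_def by blast
  have ltV: "lt \<subseteq> V \<times> V" using assms(3) unfolding vertex_ordering_def by blast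
  obtain X0 X1 where S: "S = {X0, X1}" "X0 \<noteq> X1" using assms(5) card_2_iff by metis
  have cov: "u \<in> X0 \<or> u \<in> X1" if "u \<in> V" for u
    using assms(4) that S unfolding partition_on_def by auto
  have dis: "X0 \<inter> X1 = {}"
    using assms(4) S unfolding partition_on_def pairwise_def disjnt_def by auto
  define c where "c u = (u \<in> X0)" for u
  have same: "same_class S r s \<longleftrightarrow> c r = c s" if "r \<in> V" "s \<in> V" for r s
    using cov[OF that(1)] cov[OF that(2)] dis S unfolding same_class_def c_def by auto
  have SC: "SCc E lt c" unfolding SCc_def
  proof (intro allI impI)
    fix r s t assume o: "(r, s) \<in> lt" "(s, t) \<in> lt" and e: "{r, t} \<in> E"
    have V3: "r \<in> V" "s \<in> V" "t \<in> V" using o ltV by auto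
    have "(same_class S r s \<longrightarrow> {s, t} \<in> E) \<and> (same_class S s t \<longrightarrow> {r, s} \<in> E)"
      using assms(6) o e unfolding strongly_consistent_def by blast
    then show "(c r = c s \<longrightarrow> {s, t} \<in> E) \<and> (c s = c t \<longrightarrow> {r, s} \<in> E)"
      using same V3 by auto
  qed
  have "4 \<le> card {u \<in> V. {v2, u} \<in> E}" using assms(12) unfolding degree_def .
  then obtain n1 n2 n3 n4 where nn: "n1 \<in> {u \<in> V. {v2, u} \<in> E}" "n2 \<in> {u \<in> V. {v2, u} \<in> E}"
    "n3 \<in> {u \<in> V. {v2, u} \<in> E}" "n4 \<in> {u \<in> V. {v2, u} \<in> E}" "distinct [n1, n2, n3, n4]"
    using four_elems by blast
  have nbs: "n1 \<in> V" "n2 \<in> V" "n3 \<in> V" "n4 \<in> V" "{v2, n1} \<in> E" "{v2, n2} \<in> E" "{v2, n3} \<in> E"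
      "{v2, n4} \<in> E" "distinct [n1, n2, n3, n4]" using nn by auto
  have ne: "v0 \<noteq> v1" "v0 \<noteq> v2" "v0 \<noteq> v3" using dist by auto
  have v0V: "v0 \<in> V" using sub by auto
  note pf1 = path_facts[OF P1 ne(1)] and pf2 = path_facts[OF P2 ne(2)] and pf3 = path_facts[OF P3 ne(3)]
  have v2p1: "v2 \<notin> set p1" using d12 pf2(12) ne(2) by blast
  have v2p3: "v2 \<notin> set p3" using d23 pf2(12) ne(2) by blast
  have na1: "\<forall>u\<in>set p1. u \<noteq> v0 \<longrightarrow> {v2, u} \<notin> E"
    using noadj[OF T P1 P2 ne(1) ne(2) d12 v2p1] by blast
  have d32: "(set p3 - {v0}) \<inter> (set p2 - {v0}) = {}" using d23 by blast
  have na3: "\<forall>u\<in>set p3. u \<noteq> v0 \<longrightarrow> {v2, u} \<notin> E"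
    using noadj[OF T P3 P2 ne(3) ne(2) d32 v2p3] by blast
  have tot: "(v0, v2) \<in> lt \<or> (v2, v0) \<in> lt" using L v0V assms(8) ne(2) unfolding lin_def by blast
  show False
  proof (cases "{v2, v0} \<in> E")
    case False
    have a1: "\<forall>q\<in>set p1. {v2, q} \<notin> E"
    proof
      fix q assume "q \<in> set p1"
      then show "{v2, q} \<notin> E" using na1 False by (cases "q = v0") auto
    qed
    have a3: "\<forall>q\<in>set p3. {v2, q} \<notin> E"
    proof
      fix q assume "q \<in> set p3"
      then show "{v2, q} \<notin> E" using na3 False by (cases "q = v0") auto
    qed
    from tot show False
    proof
      assume o: "(v0, v2) \<in> lt"
      show False using crossA[OF T L SC nbs assms(8) pf3(1) pf3(5) v2p3 a3 pf3(11) pf3(12) o assms(11)] .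
    next
      assume o: "(v2, v0) \<in> lt"
      show False using crossA[OF T L SC nbs assms(8) pf1(1) pf1(5) v2p1 a1 pf1(12) pf1(11) assms(10) o] .
    qed
  next
    case True
    from tot show False
    proof
      assume o: "(v0, v2) \<in> lt"
      show False using caseB[OF T L SC nbs assms(8) v0V P1 P3 ne(1) ne(3) assms(10) assms(11) o True
          v2p1 v2p3 na1 na3] .
    next
      assume o: "(v2, v0) \<in> lt"
      show False using caseB[OF T lin_converse[OF L] SCc_converse[OF SC] nbs assms(8) v0V P3 P1 ne(3) ne(1)
          _ _ _ True v2p3 v2p1 na3 na1] assms(10) assms(11) o by simp
    qed
  qed
qed


end
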